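(* Let $m\ge 2$ and $s,\ell,r_1,\dots,r_m\ge 1$ be integers, let $n=\sum_{i=1}^m(\ell+r_i)$ and $k=m\ell-s$, and let $\mathcal C$ be an $[n,k,\ell;r_1,\dots,r_m]$-PMDS code over a finite field $\mathbb{F}_q$. Then $\mathcal C$ has a generator matrix of the form $G=(B_1\mid\dots\mid B_m)$ where $B_i=(C_i\mid D_i)$ with $C_i\in\mathbb{F}_q^{k\times\ell}$ and $D_i\in\mathbb{F}_q^{k\times r_i}$ for $i=1,\dots,m$, and the matrix $G_C=(C_1\mid\dots\mid C_m)\in\mathbb{F}_q^{k\times m\ell}$ is of the form $G_C=[I_k\mid A]$ with $A\in\mathbb{F}_q^{k\times s}$ superregular.
   Context: A matrix is superregular if every square submatrix of it is nonsingular. An $[n,k]$-MDS code over a field $\mathbb{F}$ is a linear code in $\mathbb{F}^n$ of dimension $k$ and minimum Hamming distance $n-k+1$. PMDS codes: let $\ell,m,r_1,\dots,r_m$ be positive integers, $n=\sum_{i=1}^m(r_i+\ell)$, and $C\subseteq\mathbb{F}^n$ a linear code of dimension $k<n$ with generator matrix $G=(B_1\mid\dots\mid B_m)$, $B_i\in\mathbb{F}^{k\times(r_i+\ell)}$. Then $C$ is an $[n,k,\ell;r_1,\dots,r_m]$-PMDS code if (i) for each $i$ the row space of $B_i$ is an $[r_i+\ell,\ell]$-MDS code, and (ii) for any choice of $r_i$ erased coordinates in the $i$-th block for every $i$, the code obtained from $C$ by puncturing these coordinates is an $[m\ell,k]$-MDS code. *)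

theory Defs
  imports "Jordan_Normal_Form.Determinant" "Jordan_Normal_Form.DL_Submatrix"
begin

definition row_space :: "'a::field mat \<Rightarrow> 'a vec set" where
  "row_space G = {transpose_mat G *\<^sub>v c | c. c \<in> carrier_vec (dim_row G)}"

definition is_generator_matrix :: "nat \<Rightarrow> nat \<Rightarrow> 'a::field mat \<Rightarrow> 'a vec set \<Rightarrow> bool" where
  "is_generator_matrix k n G C \<longleftrightarrow>
     G \<in> carrier_mat k n \<and>
     (\<forall>c \<in> carrier_vec k. transpose_mat G *\<^sub>v c = 0\<^sub>v n \<longrightarrow> c = 0\<^sub>v k) \<and>
     C = row_space G"

definition linear_code :: "nat \<Rightarrow> nat \<Rightarrow> 'a::field vec set \<Rightarrow> bool" where
  "linear_code n k C \<longleftrightarrow> (\<exists>G. is_generator_matrix k n G C)"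

definition weight :: "'a::zero vec \<Rightarrow> nat" where
  "weight c = card {j. j < dim_vec c \<and> c $ j \<noteq> 0}"

definition min_distance :: "nat \<Rightarrow> 'a::zero vec set \<Rightarrow> nat" where
  "min_distance n C = Min {weight c | c. c \<in> C \<and> c \<noteq> 0\<^sub>v n}"

definition is_MDS :: "nat \<Rightarrow> nat \<Rightarrow> 'a::field vec set \<Rightarrow> bool" where
  "is_MDS n k C \<longleftrightarrow> linear_code n k C \<and> min_distance n C = n - k + 1"

definition puncture :: "nat set \<Rightarrow> 'a vec \<Rightarrow> 'a vec" where
  "puncture S c = vec (card {j. j < dim_vec c \<and> j \<in> S}) (\<lambda>j. c $ pick S j)"

definition block_off :: "nat \<Rightarrow> (nat \<Rightarrow> nat) \<Rightarrow> nat \<Rightarrow> nat" where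
  "block_off l r i = (\<Sum>j<i. r j + l)"

definition block_cols :: "nat \<Rightarrow> (nat \<Rightarrow> nat) \<Rightarrow> nat \<Rightarrow> nat set" where
  "block_cols l r i = {block_off l r i ..< block_off l r i + (r i + l)}"

definition block_mat :: "nat \<Rightarrow> (nat \<Rightarrow> nat) \<Rightarrow> 'a mat \<Rightarrow> nat \<Rightarrow> 'a mat" where
  "block_mat l r G i = mat (dim_row G) (r i + l) (\<lambda>(a,b). G $$ (a, block_off l r i + b))"

text \<open>[n,k,l;r_1..r_m]-PMDS code (blocks indexed 0..m-1).\<close>
definition is_PMDS :: "nat \<Rightarrow> nat \<Rightarrow> nat \<Rightarrow> nat \<Rightarrow> (nat \<Rightarrow> nat) \<Rightarrow> 'a::field vec set \<Rightarrow> bool" where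
  "is_PMDS n k l m r C \<longleftrightarrow>
     l > 0 \<and> m > 0 \<and> (\<forall>i<m. r i > 0) \<and> n = (\<Sum>i<m. r i + l) \<and> k < n \<and>
     (\<exists>G. is_generator_matrix k n G C \<and>
        (\<forall>i<m. is_MDS (r i + l) l (row_space (block_mat l r G i))) \<and>
        (\<forall>E. E \<subseteq> {0..<n} \<longrightarrow> (\<forall>i<m. card (E \<inter> block_cols l r i) = r i) \<longrightarrow>
             is_MDS (m * l) k (puncture ({0..<n} - E) ` C)))"

definition superregular :: "'a::field mat \<Rightarrow> bool" where
  "superregular A \<longleftrightarrow>
     (\<forall>I J. I \<subseteq> {0..<dim_row A} \<longrightarrow> J \<subseteq> {0..<dim_col A} \<longrightarrow> I \<noteq> {} \<longrightarrow> card I = card J \<longrightarrow>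
        det (submatrix A I J) \<noteq> 0)"

text \<open>G_C = (C_1|...|C_m): the first l columns of each block, concatenated.\<close>
definition GC_mat :: "nat \<Rightarrow> nat \<Rightarrow> (nat \<Rightarrow> nat) \<Rightarrow> 'a mat \<Rightarrow> 'a mat" where
  "GC_mat l m r G = mat (dim_row G) (m * l) (\<lambda>(a,j). G $$ (a, block_off l r (j div l) + j mod l))"

end

theory Submission
  imports Defs
begin

lemma pick_bij: assumes "finite S" shows "bij_betw (pick S) {..<card S} S"
proof (rule bij_betw_imageI)
  show "inj_on (pick S) {..<card S}"
  proof (rule inj_onI)
    fix x y assume "x \<in> {..<card S}" "y \<in> {..<card S}" "pick S x = pick S y"
    then show "x = y" using pick_mono[of y S x] pick_mono[of x S y] by (cases x y rule: linorder_cases) auto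
  qed
  show "pick S ` {..<card S} = S"
  proof
    show "pick S ` {..<card S} \<subseteq> S"
    proof
      fix x assume "x \<in> pick S ` {..<card S}"
      then obtain j where "j < card S" "x = pick S j" by auto
      then show "x \<in> S" using pick_in_set[of j S] by simp
    qed
    show "S \<subseteq> pick S ` {..<card S}"
    proof
      fix i assume i: "i \<in> S"
      have "{a\<in>S. a < i} \<subset> S" using i by auto
      hence "card {a\<in>S. a < i} < card S" using assms psubset_card_mono by blast
      moreover have "pick S (card {a\<in>S. a < i}) = i" by (rule pick_card_in_set[OF i])
      ultimately show "i \<in> pick S ` {..<card S}" by (intro image_eqI[where x="card {a\<in>S. a < i}"]) auto
    qed
  qed
qed
lemma weight_puncture:
  assumes "finite S" "S \<subseteq> {0..<dim_vec v}"
  shows "weight (puncture S v) = card {p\<in>S. v $ p \<noteq> 0}"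
proof -
  have e: "{j. j < dim_vec v \<and> j \<in> S} = S" using assms by auto
  have "weight (puncture S v) = card {j. j < card S \<and> v $ pick S j \<noteq> 0}"
    unfolding weight_def puncture_def e by (rule arg_cong[where f=card]) auto
  also have "\<dots> = card (pick S ` {j. j < card S \<and> v $ pick S j \<noteq> 0})"
    by (rule card_image[symmetric], rule inj_on_subset[OF bij_betw_imp_inj_on[OF pick_bij[OF assms(1)]]]) auto
  also have "pick S ` {j. j < card S \<and> v $ pick S j \<noteq> 0} = {p\<in>S. v $ p \<noteq> 0}"
  proof -
    have "pick S ` {..<card S} = S" using bij_betw_imp_surj_on[OF pick_bij[OF assms(1)]] .
    thus ?thesis by auto
  qed
  finally show ?thesis .
qed

lemma weight_le: "weight v \<le> dim_vec v"
proof -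
  have "{j. j < dim_vec v \<and> v $ j \<noteq> 0} \<subseteq> {..<dim_vec v}" by auto
  from card_mono[OF _ this] show ?thesis unfolding weight_def by simp
qed

lemma off_Suc: "block_off l r (Suc i) = block_off l r i + r i + l"
  unfolding block_off_def by simp

lemma off_mono: "i < i' \<Longrightarrow> block_off l r i + r i + l \<le> block_off l r i'"
proof (induction i' )
  case 0 then show ?case by simp
next
  case (Suc i') then show ?case using off_Suc[of l r i'] by (cases "i = i'") auto
qed

lemma block_unique: assumes "p \<in> block_cols l r i" "p \<in> block_cols l r i'" shows "i = i'"
proof (rule ccontr)
  assume "i \<noteq> i'"
  then consider "i < i'" | "i' < i" by linarith
  then show False
  proof cases
    case 1 then show False using off_mono[OF 1, of l r] assms unfolding block_cols_def by auto
  next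
    case 2 then show False using off_mono[OF 2, of l r] assms unfolding block_cols_def by auto
  qed
qed

lemma block_exists: "p < block_off l r m \<Longrightarrow> \<exists>i<m. p \<in> block_cols l r i"
proof (induction m)
  case 0 then show ?case by (simp add: block_off_def)
next
  case (Suc m)
  show ?case
  proof (cases "p < block_off l r m")
    case True then show ?thesis using Suc.IH by (meson less_SucI)
  next
    case False then show ?thesis using Suc.prems off_Suc[of l r m] unfolding block_cols_def by auto
  qed
qed

definition ccol :: "nat \<Rightarrow> (nat \<Rightarrow> nat) \<Rightarrow> nat \<Rightarrow> nat" where
  "ccol l r j = block_off l r (j div l) + j mod l"

lemma ccol_block: assumes "l > 0" "j < m * l"
  shows "ccol l r j \<in> block_cols l r (j div l)" "j div l < m"
proof -
  show "j div l < m" using assms by (simp add: less_mult_imp_div_less)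
  have "j mod l < l" using assms by simp
  then show "ccol l r j \<in> block_cols l r (j div l)" unfolding ccol_def block_cols_def by auto
qed

lemma ccol_inj: assumes "l > 0" shows "inj_on (ccol l r) A"
proof (rule inj_onI)
  fix x y assume eq: "ccol l r x = ccol l r y"
  have bx: "ccol l r x \<in> block_cols l r (x div l)" and by': "ccol l r y \<in> block_cols l r (y div l)"
    using assms unfolding ccol_def block_cols_def by (auto intro: trans_less_add2)
  have d: "x div l = y div l" using block_unique[OF bx] by' eq by simp
  with eq have "x mod l = y mod l" unfolding ccol_def by simp
  with d show "x = y" by (metis div_mult_mod_eq)
qed

lemma off_m: "block_off l r m = (\<Sum>i<m. l + r i)"
  unfolding block_off_def by (simp add: add.commute)

lemma block_sub: assumes "i < m" shows "block_cols l r i \<subseteq> {0..<block_off l r m}"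
proof -
  have "block_off l r i + r i + l \<le> block_off l r m" using off_mono[OF assms] .
  then show ?thesis unfolding block_cols_def by auto
qed

lemma block_inter: assumes "l > 0" "i < m"
  shows "block_cols l r i \<inter> ccol l r ` {..<m*l} = {block_off l r i..<block_off l r i + l}"
proof
  show "block_cols l r i \<inter> ccol l r ` {..<m*l} \<subseteq> {block_off l r i..<block_off l r i + l}"
  proof
    fix p assume p: "p \<in> block_cols l r i \<inter> ccol l r ` {..<m*l}"
    then obtain j where j: "j < m*l" "p = ccol l r j" by auto
    have "i = j div l" using block_unique[of p l r i "j div l"] p j ccol_block[OF assms(1) j(1)] by auto
    then show "p \<in> {block_off l r i..<block_off l r i + l}" using j assms unfolding ccol_def by auto
  qed
  show "{block_off l r i..<block_off l r i + l} \<subseteq> block_cols l r i \<inter> ccol l r ` {..<m*l}"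
  proof
    fix p assume p: "p \<in> {block_off l r i..<block_off l r i + l}"
    define t where "t = p - block_off l r i"
    have t: "t < l" "p = block_off l r i + t" using p unfolding t_def by auto
    have "i * l + t < m * l"
    proof -
      have "i * l + t < (i + 1) * l" using t by simp
      also have "\<dots> \<le> m * l" using assms by (intro mult_le_mono1) simp
      finally show ?thesis .
    qed
    moreover have "ccol l r (i * l + t) = p" unfolding ccol_def using t assms by simp
    ultimately have "p \<in> ccol l r ` {..<m*l}" by (intro image_eqI[where x="i*l+t"]) auto
    moreover have "p \<in> block_cols l r i" using p unfolding block_cols_def by auto
    ultimately show "p \<in> block_cols l r i \<inter> ccol l r ` {..<m*l}" by simp
  qed
qed

lemma ccol_sub: assumes "l > 0" shows "ccol l r ` {..<m*l} \<subseteq> {0..<block_off l r m}"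
  using ccol_block[OF assms] block_sub by blast

lemma compl_card: assumes "S \<subseteq> {0..<block_off l r m}" "i < m" "card (S \<inter> block_cols l r i) = l"
  shows "card (({0..<block_off l r m} - S) \<inter> block_cols l r i) = r i"
proof -
  have e: "({0..<block_off l r m} - S) \<inter> block_cols l r i = block_cols l r i - (S \<inter> block_cols l r i)"
    using block_sub[OF assms(2), of l r] by auto
  have "card (block_cols l r i) = r i + l" unfolding block_cols_def by simp
  then show ?thesis unfolding e using assms(3)
    by (subst card_Diff_subset) (auto simp: block_cols_def)
qed

lemma L1:
  fixes C :: "'a::field vec set"
  assumes PM: "\<forall>E. E \<subseteq> {0..<n} \<longrightarrow> (\<forall>i<m. card (E \<inter> block_cols l r i) = r i) \<longrightarrow>
             is_MDS (m * l) k (puncture ({0..<n} - E) ` C)"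
  and n: "n = block_off l r m" and k: "k + s = m*l"
  and S: "S \<subseteq> {0..<n}" "\<forall>i<m. card (S \<inter> block_cols l r i) = l"
  and v: "v \<in> C" "dim_vec v = n" and p: "p \<in> S" "v $ p \<noteq> 0"
  shows "s + 1 \<le> card {p\<in>S. v$p \<noteq> 0}"
proof -
  define E where "E = {0..<n} - S"
  have E1: "E \<subseteq> {0..<n}" unfolding E_def by auto
  have E2: "\<forall>i<m. card (E \<inter> block_cols l r i) = r i"
    unfolding E_def n using compl_card S unfolding n by blast
  have SE: "{0..<n} - E = S" unfolding E_def using S by auto
  have mds: "is_MDS (m * l) k (puncture S ` C)" using PM E1 E2 SE by metis
  hence md: "min_distance (m*l) (puncture S ` C) = s + 1" unfolding is_MDS_def using k by simp
  have finS: "finite S" using S finite_subset by blast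
  define v' where "v' = puncture S v"
  have dS: "{j. j < dim_vec v \<and> j \<in> S} = S" using S v by auto
  have dv': "dim_vec v' = card S" unfolding v'_def puncture_def dS by simp
  define j where "j = card {a\<in>S. a < p}"
  have "{a\<in>S. a < p} \<subset> S" using p by auto
  hence j: "j < card S" unfolding j_def using finS psubset_card_mono by blast
  have "v' $ j = v $ pick S j" unfolding v'_def puncture_def dS using j by simp
  also have "pick S j = p" unfolding j_def by (rule pick_card_in_set[OF p(1)])
  finally have v'j: "v' $ j \<noteq> 0" using p by simp
  have nz: "v' \<noteq> 0\<^sub>v (m*l)"
  proof
    assume "v' = 0\<^sub>v (m*l)"
    then have "v' $ j = 0" using j dv' by auto
    with v'j show False by simp
  qed
  let ?W = "{weight c | c. c \<in> puncture S ` C \<and> c \<noteq> 0\<^sub>v (m*l)}"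
  have "?W \<subseteq> {..card S}"
  proof
    fix w assume "w \<in> ?W"
    then obtain c0 :: "'a vec" where w: "w = weight (puncture S c0)" by auto
    have "dim_vec (puncture S c0) = card {j. j < dim_vec c0 \<and> j \<in> S}" unfolding puncture_def by simp
    also have "\<dots> \<le> card S" by (rule card_mono[OF finS]) auto
    finally show "w \<in> {..card S}" using weight_le[of "puncture S c0"] w by simp
  qed
  hence finW: "finite ?W" using finite_subset by blast
  have "weight v' \<in> ?W" using nz v unfolding v'_def by blast
  hence "Min ?W \<le> weight v'" using finW by simp
  moreover have "weight v' = card {p\<in>S. v$p \<noteq> 0}"
    unfolding v'_def by (rule weight_puncture[OF finS]) (use S v in auto)
  ultimately show ?thesis using md unfolding min_distance_def by simp
qed

lemma L3:
  fixes C :: "'a::field vec set"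
  assumes PM: "\<forall>E. E \<subseteq> {0..<n} \<longrightarrow> (\<forall>i<m. card (E \<inter> block_cols l r i) = r i) \<longrightarrow>
             is_MDS (m * l) k (puncture ({0..<n} - E) ` C)"
  and n: "n = block_off l r m" and k: "k + s = m*l" and l: "l > 0" and s: "s \<ge> 1"
  and v: "v \<in> C" "dim_vec v = n"
  and Z: "Z \<subseteq> {..<m*l}" "k \<le> card Z" "\<forall>j\<in>Z. v $ ccol l r j = 0"
  shows "v = 0\<^sub>v n"
proof (rule ccontr)
  assume vnz: "v \<noteq> 0\<^sub>v n"
  define CC where "CC = ccol l r ` {..<m*l}"
  have CCn: "CC \<subseteq> {0..<n}" unfolding CC_def n by (rule ccol_sub[OF l])
  have finCC: "finite CC" unfolding CC_def by simp
  have cardCC: "card CC = m*l" unfolding CC_def by (simp add: card_image[OF ccol_inj[OF l]])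
  have CCB: "\<And>i. i < m \<Longrightarrow> CC \<inter> block_cols l r i = {block_off l r i..<block_off l r i + l}"
    unfolding CC_def using block_inter[OF l] by (simp add: Int_commute)
  show False
  proof (cases "\<exists>p\<in>CC. v $ p \<noteq> 0")
    case True
    then obtain p where p: "p \<in> CC" "v $ p \<noteq> 0" by blast
    have "s + 1 \<le> card {p\<in>CC. v$p \<noteq> 0}"
      by (rule L1[OF PM n k CCn _ v p]) (simp add: CCB)
    also have "\<dots> \<le> card (CC - ccol l r ` Z)"
      by (rule card_mono) (use finCC Z(3) in auto)
    also have "\<dots> = m*l - card Z"
    proof -
      have "ccol l r ` Z \<subseteq> CC" unfolding CC_def using Z(1) by auto
      moreover have "card (ccol l r ` Z) = card Z" by (rule card_image[OF ccol_inj[OF l]])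
      ultimately show ?thesis using finCC cardCC by (simp add: card_Diff_subset finite_subset)
    qed
    finally show False using k Z(2) by linarith
  next
    case False
    obtain p where p: "p < n" "v $ p \<noteq> 0" using vnz v(2) by (metis eq_vecI index_zero_vec dim_vec)
    obtain i0 where i0: "i0 < m" "p \<in> block_cols l r i0" using block_exists[of p l r m] p n by auto
    have pCC: "p \<notin> CC" using False p by auto
    define q where "q = block_off l r i0"
    have qB: "q \<in> CC \<inter> block_cols l r i0" using CCB[OF i0(1)] l unfolding q_def by auto
    define S' where "S' = insert p (CC - {q})"
    have S'n: "S' \<subseteq> {0..<n}" unfolding S'_def using CCn p by auto
    have S'B: "\<forall>i<m. card (S' \<inter> block_cols l r i) = l"
    proof (intro allI impI)
      fix i assume i: "i < m"
      show "card (S' \<inter> block_cols l r i) = l"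
      proof (cases "i = i0")
        case True
        have e: "S' \<inter> block_cols l r i = insert p ((CC \<inter> block_cols l r i) - {q})"
          unfolding S'_def using True i0 by auto
        have "card ((CC \<inter> block_cols l r i) - {q}) = l - 1"
        proof -
          have "q \<in> CC \<inter> block_cols l r i" using qB True by simp
          moreover have "card (CC \<inter> block_cols l r i) = l" using CCB[OF i] by simp
          ultimately show ?thesis using card_Diff_singleton[of q "CC \<inter> block_cols l r i"] finCC by simp
        qed
        moreover have "p \<notin> (CC \<inter> block_cols l r i) - {q}" using pCC by auto
        ultimately show ?thesis unfolding e using l CCB[OF i] by simp
      next
        case False
        have "p \<notin> block_cols l r i" using block_unique[of p l r i i0] i0 False by auto
        moreover have "q \<notin> block_cols l r i" using block_unique[of q l r i i0] qB False by auto
        ultimately have "S' \<inter> block_cols l r i = CC \<inter> block_cols l r i" unfolding S'_def by auto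
        then show ?thesis using CCB[OF i] by simp
      qed
    qed
    have "s + 1 \<le> card {x\<in>S'. v$x \<noteq> 0}"
      by (rule L1[OF PM n k S'n S'B v, of p]) (use p in \<open>auto simp: S'_def\<close>)
    also have "\<dots> \<le> card {p}"
      by (rule card_mono) (use False in \<open>auto simp: S'_def\<close>)
    finally show False using s by simp
  qed
qed

lemma tmv_index: fixes G :: "'a::comm_ring_1 mat" assumes "G \<in> carrier_mat k n" "c \<in> carrier_vec k" "p < n"
  shows "(transpose_mat G *\<^sub>v c) $ p = (\<Sum>a<k. c $ a * G $$ (a, p))"
  using assms by (auto simp: scalar_prod_def lessThan_atLeast0 mult.commute intro!: sum.cong)

lemma L4:
  fixes C :: "'a::field vec set"
  assumes PM: "\<forall>E. E \<subseteq> {0..<n} \<longrightarrow> (\<forall>i<m. card (E \<inter> block_cols l r i) = r i) \<longrightarrow>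
             is_MDS (m * l) k (puncture ({0..<n} - E) ` C)"
  and n: "n = block_off l r m" and k: "k + s = m*l" and l: "l > 0" and s: "s \<ge> 1"
  and gen: "is_generator_matrix k n G C" and c: "c \<in> carrier_vec k"
  and Z: "Z \<subseteq> {..<m*l}" "k \<le> card Z" "\<forall>j\<in>Z. (\<Sum>a<k. c $ a * G $$ (a, ccol l r j)) = 0"
  shows "c = 0\<^sub>v k"
proof -
  have G: "G \<in> carrier_mat k n" and ind: "\<forall>c \<in> carrier_vec k. transpose_mat G *\<^sub>v c = 0\<^sub>v n \<longrightarrow> c = 0\<^sub>v k"
    and CG: "C = row_space G" using gen unfolding is_generator_matrix_def by auto
  define v where "v = transpose_mat G *\<^sub>v c"
  have vC: "v \<in> C" unfolding CG row_space_def v_def using G c by auto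
  have dv: "dim_vec v = n" unfolding v_def using G by simp
  have "\<forall>j\<in>Z. v $ ccol l r j = 0"
  proof
    fix j assume j: "j \<in> Z"
    have "ccol l r j \<in> ccol l r ` {..<m*l}" using Z(1) j by auto
    hence "ccol l r j < n" using ccol_sub[OF l, of r m] n by auto
    then show "v $ ccol l r j = 0" unfolding v_def using tmv_index[OF G c] Z(3) j by simp
  qed
  then have "v = 0\<^sub>v n" using L3[OF PM n k l s vC dv Z(1,2)] by blast
  then show ?thesis using ind c unfolding v_def by blast
qed

theorem theorem15:
  fixes C :: "'a::{finite,field} vec set"
    and m s l k n :: nat and r :: "nat \<Rightarrow> nat"
  assumes "m \<ge> 2" and "s \<ge> 1" and "l \<ge> 1" and "\<forall>i<m. r i \<ge> 1"
    and "n = (\<Sum>i<m. l + r i)"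
    and "int k = int (m * l) - int s"
    and "is_PMDS n k l m r C"
  shows "\<exists>G A. is_generator_matrix k n G C \<and> A \<in> carrier_mat k s \<and> superregular A \<and>
           GC_mat l m r G = four_block_mat (1\<^sub>m k) A (0\<^sub>m 0 k) (0\<^sub>m 0 s)"
proof -
  have l: "l > 0" using assms(3) by simp
  have s: "s \<ge> 1" by fact
  have n: "n = block_off l r m" using assms(5) off_m by simp
  have k: "k + s = m * l" using assms(6) by linarith
  obtain G0 where gen0: "is_generator_matrix k n G0 C" and
    PM: "\<forall>E. E \<subseteq> {0..<n} \<longrightarrow> (\<forall>i<m. card (E \<inter> block_cols l r i) = r i) \<longrightarrow>
             is_MDS (m * l) k (puncture ({0..<n} - E) ` C)"
    using assms(7) unfolding is_PMDS_def by blast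
  have G0: "G0 \<in> carrier_mat k n" and ind0: "\<forall>c \<in> carrier_vec k. transpose_mat G0 *\<^sub>v c = 0\<^sub>v n \<longrightarrow> c = 0\<^sub>v k"
    and CG0: "C = row_space G0" using gen0 unfolding is_generator_matrix_def by auto
  note L4' = L4[OF PM n k l s]
  have ccn: "\<And>j. j < m * l \<Longrightarrow> ccol l r j < n"
  proof -
    fix j assume "j < m * l"
    hence "ccol l r j \<in> ccol l r ` {..<m*l}" by auto
    thus "ccol l r j < n" using ccol_sub[OF l, of r m] n by auto
  qed
  have ckn: "\<And>j. j < k \<Longrightarrow> ccol l r j < n" using ccn k by simp
  define M where "M = mat k k (\<lambda>(a,b). G0 $$ (a, ccol l r b))"
  have M: "M \<in> carrier_mat k k" unfolding M_def by simp
  have detM: "det M \<noteq> 0"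
  proof
    assume "det M = 0"
    hence "det (transpose_mat M) = 0" using det_transpose[OF M] by simp
    then obtain c where c: "c \<in> carrier_vec k" "c \<noteq> 0\<^sub>v k" "transpose_mat M *\<^sub>v c = 0\<^sub>v k"
      using det_0_iff_vec_prod_zero_field[of "transpose_mat M" k] M by auto
    have "\<forall>j\<in>{..<k}. (\<Sum>a<k. c $ a * G0 $$ (a, ccol l r j)) = 0"
    proof
      fix j assume j: "j \<in> {..<k}"
      have "(transpose_mat M *\<^sub>v c) $ j = (\<Sum>a<k. c $ a * M $$ (a, j))"
        using tmv_index[OF M c(1)] j by simp
      also have "\<dots> = (\<Sum>a<k. c $ a * G0 $$ (a, ccol l r j))"
        using j unfolding M_def by (intro sum.cong) auto
      finally show "(\<Sum>a<k. c $ a * G0 $$ (a, ccol l r j)) = 0" using c(3) j by simp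
    qed
    then have "c = 0\<^sub>v k" using L4'[OF gen0 c(1), of "{..<k}"] k by simp
    with c(2) show False by simp
  qed
  obtain B where MB: "M * B = 1\<^sub>m k" and BM: "B * M = 1\<^sub>m k" and B: "B \<in> carrier_mat k k"
  proof (cases "mat_inverse M")
    case None
    have "M \<in> Units (ring_mat TYPE('a) k ())" by (rule det_non_zero_imp_unit[OF M detM])
    with mat_inverse(1)[OF M None, where b="()"] show ?thesis by blast
  next
    case (Some B')
    then show ?thesis using mat_inverse(2)[OF M Some] that by blast
  qed
  define G where "G = B * G0"
  have G: "G \<in> carrier_mat k n" unfolding G_def using B G0 by simp
  have tG: "\<And>c. c \<in> carrier_vec k \<Longrightarrow> transpose_mat G *\<^sub>v c = transpose_mat G0 *\<^sub>v (transpose_mat B *\<^sub>v c)"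
    unfolding G_def using B G0 by (simp add: transpose_mult assoc_mult_mat_vec[of _ n k _ k])
  have tMB: "\<And>c. c \<in> carrier_vec k \<Longrightarrow> transpose_mat M *\<^sub>v (transpose_mat B *\<^sub>v c) = c"
  proof -
    fix c :: "'a vec" assume c: "c \<in> carrier_vec k"
    have "transpose_mat M *\<^sub>v (transpose_mat B *\<^sub>v c) = (transpose_mat M * transpose_mat B) *\<^sub>v c"
      using M B c by (simp add: assoc_mult_mat_vec[of _ k k _ k])
    also have "transpose_mat M * transpose_mat B = transpose_mat (B * M)"
      using M B by (simp add: transpose_mult)
    also have "\<dots> = 1\<^sub>m k" using BM by simp
    finally show "transpose_mat M *\<^sub>v (transpose_mat B *\<^sub>v c) = c" using c by simp
  qed
  have gen: "is_generator_matrix k n G C"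
    unfolding is_generator_matrix_def
  proof (intro conjI ballI impI)
    show "G \<in> carrier_mat k n" by (rule G)
  next
    fix c :: "'a vec" assume c: "c \<in> carrier_vec k" and z: "transpose_mat G *\<^sub>v c = 0\<^sub>v n"
    have "transpose_mat B *\<^sub>v c = 0\<^sub>v k" using ind0 z tG[OF c] B c by simp
    moreover have "transpose_mat M *\<^sub>v 0\<^sub>v k = 0\<^sub>v k" using M by (intro eq_vecI) auto
    ultimately show "c = 0\<^sub>v k" using tMB[OF c] by simp
  next
    show "C = row_space G"
    proof
      show "C \<subseteq> row_space G"
      proof
        fix v assume "v \<in> C"
        then obtain c where c: "c \<in> carrier_vec k" "v = transpose_mat G0 *\<^sub>v c"
          unfolding CG0 row_space_def using G0 by auto
        have "transpose_mat M *\<^sub>v c \<in> carrier_vec k" using M c by simp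
        moreover have "transpose_mat G *\<^sub>v (transpose_mat M *\<^sub>v c) = v"
        proof -
          have "transpose_mat B *\<^sub>v (transpose_mat M *\<^sub>v c) = c"
          proof -
            have "transpose_mat B *\<^sub>v (transpose_mat M *\<^sub>v c) = (transpose_mat B * transpose_mat M) *\<^sub>v c"
              using M B c by (simp add: assoc_mult_mat_vec[of _ k k _ k])
            also have "transpose_mat B * transpose_mat M = transpose_mat (M * B)"
              using M B by (simp add: transpose_mult)
            also have "\<dots> = 1\<^sub>m k" using MB by simp
            finally show ?thesis using c by simp
          qed
          then show ?thesis using tG[of "transpose_mat M *\<^sub>v c"] M c by simp
        qed
        ultimately show "v \<in> row_space G" unfolding row_space_def using G by force
      qed
      show "row_space G \<subseteq> C"
      proof
        fix v assume "v \<in> row_space G"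
        then obtain c where c: "c \<in> carrier_vec k" "v = transpose_mat G *\<^sub>v c"
          unfolding row_space_def using G by auto
        have "transpose_mat B *\<^sub>v c \<in> carrier_vec k" using B c by simp
        then show "v \<in> C" unfolding CG0 row_space_def using c tG[OF c(1)] G0 by force
      qed
    qed
  qed
  have Gid: "\<And>a j. a < k \<Longrightarrow> j < k \<Longrightarrow> G $$ (a, ccol l r j) = (if a = j then 1 else 0)"
  proof -
    fix a j assume a: "a < k" and j: "j < k"
    have "G $$ (a, ccol l r j) = row B a \<bullet> col G0 (ccol l r j)"
      unfolding G_def using a B G0 ckn[OF j] by simp
    also have "col G0 (ccol l r j) = col M j"
      using G0 M j ckn[OF j] unfolding M_def by (intro eq_vecI) auto
    also have "row B a \<bullet> col M j = (B * M) $$ (a, j)" using a j B M by simp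
    finally show "G $$ (a, ccol l r j) = (if a = j then 1 else 0)" using BM a j by simp
  qed
  define A where "A = mat k s (\<lambda>(a,b). G $$ (a, ccol l r (k + b)))"
  have A: "A \<in> carrier_mat k s" unfolding A_def by simp
  have GA: "\<And>a b. a < k \<Longrightarrow> b < s \<Longrightarrow> G $$ (a, ccol l r (k + b)) = A $$ (a, b)"
    unfolding A_def by simp
  have GC: "GC_mat l m r G = four_block_mat (1\<^sub>m k) A (0\<^sub>m 0 k) (0\<^sub>m 0 s)"
  proof (rule eq_matI)
    show "dim_row (GC_mat l m r G) = dim_row (four_block_mat (1\<^sub>m k) A (0\<^sub>m 0 k) (0\<^sub>m 0 s))"
      unfolding GC_mat_def using G A by simp
    show "dim_col (GC_mat l m r G) = dim_col (four_block_mat (1\<^sub>m k) A (0\<^sub>m 0 k) (0\<^sub>m 0 s))"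
      unfolding GC_mat_def using G A k by simp
    fix i j assume i: "i < dim_row (four_block_mat (1\<^sub>m k) A (0\<^sub>m 0 k) (0\<^sub>m 0 s))"
      and j: "j < dim_col (four_block_mat (1\<^sub>m k) A (0\<^sub>m 0 k) (0\<^sub>m 0 s))"
    have i': "i < k" and j': "j < k + s" using i j A by auto
    have "GC_mat l m r G $$ (i, j) = G $$ (i, ccol l r j)"
      unfolding GC_mat_def ccol_def using G i' j' k by simp
    also have "\<dots> = four_block_mat (1\<^sub>m k) A (0\<^sub>m 0 k) (0\<^sub>m 0 s) $$ (i, j)"
    proof (cases "j < k")
      case True then show ?thesis using Gid[OF i' True] i' A by simp
    next
      case False
      then have "G $$ (i, ccol l r j) = A $$ (i, j - k)" using GA[OF i', of "j - k"] j' by simp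
      then show ?thesis using False i' j' A by simp
    qed
    finally show "GC_mat l m r G $$ (i, j) = four_block_mat (1\<^sub>m k) A (0\<^sub>m 0 k) (0\<^sub>m 0 s) $$ (i, j)" .
  qed
  have SR: "superregular A"
    unfolding superregular_def
  proof (intro allI impI)
    fix I J assume I: "I \<subseteq> {0..<dim_row A}" and J: "J \<subseteq> {0..<dim_col A}" and Ine: "I \<noteq> {}"
      and IJ: "card I = card J"
    have I': "I \<subseteq> {0..<k}" and J': "J \<subseteq> {0..<s}" using I J A by auto
    define t where "t = card I"
    have finI: "finite I" using finite_subset[OF I'] by simp
    have finJ: "finite J" using finite_subset[OF J'] by simp
    have rI: "{i. i < dim_row A \<and> i \<in> I} = I" using I by fastforce
    have rJ: "{i. i < dim_col A \<and> i \<in> J} = J" using J by fastforce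
    define Sb where "Sb = submatrix A I J"
    have "dim_row Sb = t" unfolding Sb_def t_def dim_submatrix rI ..
    moreover have "dim_col Sb = t" unfolding Sb_def t_def dim_submatrix rJ IJ ..
    ultimately have Sb: "Sb \<in> carrier_mat t t" by (intro carrier_matI)
    have Sbi: "\<And>a b. a < t \<Longrightarrow> b < t \<Longrightarrow> Sb $$ (a, b) = A $$ (pick I a, pick J b)"
      unfolding Sb_def using IJ by (subst submatrix_index) (simp_all add: rI rJ t_def)
    show "det (submatrix A I J) \<noteq> 0"
    proof
      assume "det (submatrix A I J) = 0"
      hence "det Sb = 0" unfolding Sb_def .
      hence "det (transpose_mat Sb) = 0" using det_transpose[OF Sb] by simp
      then obtain x where x: "x \<in> carrier_vec t" "x \<noteq> 0\<^sub>v t" "transpose_mat Sb *\<^sub>v x = 0\<^sub>v t"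
        using det_0_iff_vec_prod_zero_field[of "transpose_mat Sb" t] Sb by auto
      define rk where "rk = (\<lambda>i. card {a\<in>I. a < i})"
      define c where "c = vec k (\<lambda>i. if i \<in> I then x $ rk i else 0)"
      have c: "c \<in> carrier_vec k" unfolding c_def by simp
      have bijI: "bij_betw (pick I) {..<t} I" unfolding t_def by (rule pick_bij[OF finI])
      have rkpick: "\<And>a. a < t \<Longrightarrow> rk (pick I a) = a"
        unfolding rk_def t_def by (rule card_pick) simp
      have pickrk: "\<And>i. i \<in> I \<Longrightarrow> pick I (rk i) = i"
        unfolding rk_def by (rule pick_card_in_set)
      have cnz: "c \<noteq> 0\<^sub>v k"
      proof
        assume c0: "c = 0\<^sub>v k"
        have "x = 0\<^sub>v t"
        proof (rule eq_vecI)
          fix a assume "a < dim_vec (0\<^sub>v t :: 'a vec)"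
          hence a: "a < t" by simp
          have pI: "pick I a \<in> I" using bij_betw_apply[OF bijI] a by simp
          hence pk: "pick I a < k" using I' by auto
          hence "c $ pick I a = 0" using c0 by simp
          thus "x $ a = 0\<^sub>v t $ a" unfolding c_def using pI pk rkpick[OF a] a by simp
        qed (use x in simp)
        with x(2) show False by simp
      qed
      define Z where "Z = ({..<k} - I) \<union> ((+) k ` J)"
      have Zsub: "Z \<subseteq> {..<m*l}" unfolding Z_def using J' k by auto
      have cardZ: "k \<le> card Z"
      proof -
        have d: "({..<k} - I) \<inter> ((+) k ` J) = {}" by auto
        have "card Z = card ({..<k} - I) + card ((+) k ` J)"
          unfolding Z_def using finJ by (intro card_Un_disjoint) auto
        also have "card ({..<k} - I) = k - t" unfolding t_def using I' by (subst card_Diff_subset) (auto simp: finI)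
        also have "card ((+) k ` J) = t" unfolding t_def IJ by (simp add: card_image)
        finally have "card Z = k - t + t" .
        moreover have "t \<le> k"
        proof -
          have "I \<subseteq> {..<k}" using I' by auto
          from card_mono[OF _ this] show ?thesis unfolding t_def by simp
        qed
        ultimately show ?thesis by simp
      qed
      have Zv: "\<forall>j\<in>Z. (\<Sum>a<k. c $ a * G $$ (a, ccol l r j)) = 0"
      proof
        fix j assume "j \<in> Z"
        then consider (a) "j < k" "j \<notin> I" | (b) b where "b \<in> J" "j = k + b" unfolding Z_def by auto
        then show "(\<Sum>a<k. c $ a * G $$ (a, ccol l r j)) = 0"
        proof cases
          case a
          have "(\<Sum>a<k. c $ a * G $$ (a, ccol l r j)) = (\<Sum>a<k. if a = j then c $ a else 0)"
            using Gid a(1) by (intro sum.cong) auto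
          also have "\<dots> = c $ j" using a(1) by simp
          finally show ?thesis using a unfolding c_def by simp
        next
          case b
          have bs: "b < s" using b J' by auto
          have "(\<Sum>a<k. c $ a * G $$ (a, ccol l r j)) = (\<Sum>a<k. c $ a * A $$ (a, b))"
            using GA bs b(2) by (intro sum.cong) auto
          also have "\<dots> = (\<Sum>a\<in>I. x $ rk a * A $$ (a, b))"
          proof -
            have "(\<Sum>a<k. c $ a * A $$ (a, b)) = (\<Sum>a\<in>I. c $ a * A $$ (a, b))"
              by (rule sum.mono_neutral_right) (use I' in \<open>auto simp: c_def\<close>)
            also have "\<dots> = (\<Sum>a\<in>I. x $ rk a * A $$ (a, b))"
              using I' by (intro sum.cong) (auto simp: c_def)
            finally show ?thesis .
          qed
          also have "\<dots> = (\<Sum>a'<t. x $ rk (pick I a') * A $$ (pick I a', b))"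
            by (rule sum.reindex_bij_betw[OF bijI, symmetric])
          also have "\<dots> = (\<Sum>a'<t. x $ a' * A $$ (pick I a', b))"
            using rkpick by (intro sum.cong) auto
          also have "\<dots> = 0"
          proof -
            define b' where "b' = card {y\<in>J. y < b}"
            have "{y\<in>J. y < b} \<subset> J" using b by auto
            hence b't: "b' < t" unfolding b'_def t_def IJ using finJ psubset_card_mono by blast
            have pb: "pick J b' = b" unfolding b'_def by (rule pick_card_in_set[OF b(1)])
            have "(transpose_mat Sb *\<^sub>v x) $ b' = (\<Sum>a<t. x $ a * Sb $$ (a, b'))"
              by (rule tmv_index[OF Sb x(1) b't])
            also have "\<dots> = (\<Sum>a'<t. x $ a' * A $$ (pick I a', b))"
              using Sbi b't pb by (intro sum.cong) auto
            finally show ?thesis using x(3) b't by simp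
          qed
          finally show ?thesis .
        qed
      qed
      have "c = 0\<^sub>v k" by (rule L4'[OF gen c Zsub cardZ Zv])
      with cnz show False by simp
    qed
  qed
  show ?thesis using gen A SR GC by blast
qed

end
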